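(* Let $\Psi\colon\mathbb R^{m+n}\to\mathbb R^m$ be the projection, $V\subseteq\mathbb R^m$ a closed subset, and $f\in C^\infty(\mathbb R^{m+n})$ with $f^{-1}(0)=\Psi^{-1}(V)$. Then there exist $g\in C^\infty(\mathbb R^{m+n})$ and $h\in C^\infty(\mathbb R^m)$ such that $h\circ\Psi=fg$ and $g^{-1}(0)=\Psi^{-1}(V)$. *)

theory Defs
  imports "HOL-Analysis.Analysis"
begin

fun Ck :: "nat \<Rightarrow> ('a::euclidean_space \<Rightarrow> real) \<Rightarrow> bool" where
  "Ck 0 f = continuous_on UNIV f"
| "Ck (Suc k) f = (f differentiable_on UNIV \<and>
      (\<forall>b\<in>Basis. Ck k (\<lambda>x. frechet_derivative f (at x) b)))"

definition smooth :: "('a::euclidean_space \<Rightarrow> real) \<Rightarrow> bool" where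
  "smooth f \<longleftrightarrow> (\<forall>k. Ck k f)"

end

theory Submission
  imports Defs "HOL-Computational_Algebra.Polynomial"
begin


definition pd :: "'a::euclidean_space \<Rightarrow> ('a \<Rightarrow> real) \<Rightarrow> 'a \<Rightarrow> real" where
  "pd b w x = frechet_derivative w (at x) b"

lemma smooth_class:
  fixes C :: "('a::euclidean_space \<Rightarrow> real) set"
  assumes d: "\<And>w x. w \<in> C \<Longrightarrow> w differentiable (at x)"
  and p: "\<And>w b. w \<in> C \<Longrightarrow> b \<in> Basis \<Longrightarrow> (\<lambda>x. pd b w x) \<in> C"
  and w: "w \<in> C"
  shows "smooth w"
proof -
  have "\<forall>w\<in>C. Ck k w" for k
  proof (induction k)
    case 0
    then show ?case using d
      by (auto intro!: differentiable_imp_continuous_on simp: differentiable_on_def)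
  next
    case (Suc k)
    then show ?case using d p by (auto simp: differentiable_on_def pd_def)
  qed
  then show ?thesis using w by (auto simp: smooth_def)
qed

lemma smooth_diff: "smooth f \<Longrightarrow> f differentiable (at x)"
  unfolding smooth_def by (metis Ck.simps(2) UNIV_I differentiable_on_def)

lemma smooth_pd: "smooth f \<Longrightarrow> b \<in> Basis \<Longrightarrow> smooth (\<lambda>x. pd b f x)"
  unfolding smooth_def pd_def by (metis Ck.simps(2))

lemma smooth_cont: "smooth f \<Longrightarrow> continuous_on UNIV f"
  unfolding smooth_def by (metis Ck.simps(1))

lemma smooth_hasd: "smooth f \<Longrightarrow> (f has_derivative (\<lambda>v. pd v f x)) (at x)"
  unfolding pd_def using smooth_diff frechet_derivative_works by (metis eta_contract_eq)

lemma pd_eq: "(f has_derivative f') (at x) \<Longrightarrow> pd b f x = f' b"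
  unfolding pd_def using frechet_derivative_at by metis

lemma smooth_const: "smooth (\<lambda>x. c)"
  by (rule smooth_class[where C="{\<lambda>x. c | c. True}"]) (auto simp: pd_def)


lemma hasd_sum_list:
  assumes "\<And>p. p \<in> set ps \<Longrightarrow> (F p has_derivative F' p) (at x)"
  shows "((\<lambda>x. \<Sum>p\<leftarrow>ps. F p x) has_derivative (\<lambda>v. \<Sum>p\<leftarrow>ps. F' p v)) (at x)"
  using assms
proof (induction ps)
  case Nil
  then show ?case by simp
next
  case (Cons a ps)
  then show ?case by (auto intro!: has_derivative_add)
qed

lemma smooth_mult:
  fixes a b :: "'a::euclidean_space \<Rightarrow> real"
  assumes "smooth a" "smooth b"
  shows "smooth (\<lambda>x. a x * b x)"
proof -
  define C :: "('a \<Rightarrow> real) set" where "C = {w. \<exists>ps. (\<forall>(a,b)\<in>set ps. smooth a \<and> smooth b) \<and>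
       w = (\<lambda>x. \<Sum>(a,b)\<leftarrow>ps. a x * b x)}"
  have hd: "((\<lambda>x. \<Sum>(a,b)\<leftarrow>ps. a x * b x) has_derivative
        (\<lambda>v. \<Sum>(a,b)\<leftarrow>ps. pd v a x * b x + a x * pd v b x)) (at x)"
    if "\<forall>(a,b)\<in>set ps. smooth a \<and> smooth b" for ps and x :: 'a
  proof -
    have "((\<lambda>x. \<Sum>p\<leftarrow>ps. (case p of (a,b) \<Rightarrow> a x * b x)) has_derivative
        (\<lambda>v. \<Sum>p\<leftarrow>ps. (case p of (a,b) \<Rightarrow> pd v a x * b x + a x * pd v b x))) (at x)"
      apply (rule hasd_sum_list)
      subgoal for p using that
        by (cases p) (auto intro!: has_derivative_eq_rhs[OF has_derivative_mult[OF smooth_hasd smooth_hasd]]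
            simp: algebra_simps)
      done
    then show ?thesis by (simp add: case_prod_unfold)
  qed
  have eqc: "(\<Sum>(a,b)\<leftarrow>ps. pd c a x * b x + a x * pd c b x) =
     (\<Sum>(a,b)\<leftarrow>concat (map (\<lambda>(a,b). [(\<lambda>x. pd c a x, b), (a, \<lambda>x. pd c b x)]) ps). a x * b x)" for ps and c x :: 'a
    by (induction ps) auto
  show ?thesis
  proof (rule smooth_class[of C])
    fix w x assume "w \<in> C" then show "w differentiable (at x)"
      unfolding C_def using hd differentiableI by blast
  next
    fix w and c :: 'a assume w: "w \<in> C" and c: "c \<in> Basis"
    then obtain ps where ps: "\<forall>(a,b)\<in>set ps. smooth a \<and> smooth b" "w = (\<lambda>x. \<Sum>(a,b)\<leftarrow>ps. a x * b x)"
      unfolding C_def by blast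
    have "(\<lambda>x. pd c w x) = (\<lambda>x. \<Sum>(a,b)\<leftarrow>concat (map (\<lambda>(a,b). [(\<lambda>x. pd c a x, b), (a, \<lambda>x. pd c b x)]) ps). a x * b x)"
      using pd_eq[OF hd[OF ps(1)]] ps(2) eqc by auto
    moreover have "\<forall>(a,b)\<in>set (concat (map (\<lambda>(a,b). [(\<lambda>x. pd c a x, b), (a, \<lambda>x. pd c b x)]) ps)). smooth a \<and> smooth b"
      using ps(1) c by (auto intro: smooth_pd)
    ultimately show "(\<lambda>x. pd c w x) \<in> C" unfolding C_def by blast
  next
    show "(\<lambda>x. a x * b x) \<in> C" unfolding C_def using assms
      by (intro CollectI exI[of _ "[(a,b)]"]) auto
  qed
qed


lemma pd_zero: "smooth G \<Longrightarrow> pd 0 G y = 0"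
  using has_derivative_linear[OF smooth_hasd[of G y]] linear_0 by blast

lemma smooth_lin:
  fixes L :: "'a::euclidean_space \<Rightarrow> 'b::euclidean_space" and F :: "'b \<Rightarrow> real"
  assumes L: "linear L" "\<forall>b\<in>Basis. L b \<in> Basis \<or> L b = 0" and F: "smooth F"
  shows "smooth (\<lambda>x. F (L x))"
proof -
  define C :: "('a \<Rightarrow> real) set" where "C = {w. \<exists>G. smooth G \<and> w = (\<lambda>x. G (L x))}"
  have hd: "((\<lambda>x. G (L x)) has_derivative (\<lambda>v. pd (L v) G (L x))) (at x)" if "smooth G" for G x
    using has_derivative_compose[OF linear_imp_has_derivative[OF L(1)] smooth_hasd[OF that]] by simp
  show ?thesis
  proof (rule smooth_class[of C])
    fix w x assume "w \<in> C" then show "w differentiable (at x)"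
      unfolding C_def using hd differentiableI by blast
  next
    fix w and c :: 'a assume w: "w \<in> C" and c: "c \<in> Basis"
    then obtain G where G: "smooth G" "w = (\<lambda>x. G (L x))" unfolding C_def by blast
    have e: "pd c w x = pd (L c) G (L x)" for x using pd_eq[OF hd[OF G(1)]] G(2) by simp
    show "(\<lambda>x. pd c w x) \<in> C"
    proof (cases "L c = 0")
      case True
      then have "(\<lambda>x. pd c w x) = (\<lambda>x. (\<lambda>y. 0::real) (L x))" using e pd_zero[OF G(1)] by simp
      then show ?thesis unfolding C_def using smooth_const by blast
    next
      case False
      then have "L c \<in> Basis" using L(2) c by blast
      then show ?thesis unfolding C_def using e smooth_pd[OF G(1)] by blast
    qed
  next
    show "(\<lambda>x. F (L x)) \<in> C" unfolding C_def using F by blast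
  qed
qed


lemma fam_hasd:
  assumes "\<And>j s. (Fam j has_real_derivative Fam (Suc j) s) (at s)" "smooth v"
  shows "((\<lambda>x. Fam j (v x)) has_derivative (\<lambda>h. Fam (Suc j) (v x) * pd h v x)) (at x)"
  using has_derivative_compose[OF smooth_hasd[OF assms(2)], of "Fam j" "(*) (Fam (Suc j) (v x))"]
    assms(1) unfolding has_field_derivative_def by simp

lemma smooth_fam:
  fixes Fam :: "nat \<Rightarrow> real \<Rightarrow> real" and v :: "'a::euclidean_space \<Rightarrow> real"
  assumes Fam: "\<And>j s. (Fam j has_real_derivative Fam (Suc j) s) (at s)" and v: "smooth v"
  shows "smooth (\<lambda>x. Fam 0 (v x))"
proof -
  define C :: "('a \<Rightarrow> real) set" where "C = {w. \<exists>ps. (\<forall>(j,P)\<in>set ps. smooth P) \<and>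
       w = (\<lambda>x. \<Sum>(j,P)\<leftarrow>ps. Fam j (v x) * P x)}"
  have hd: "((\<lambda>x. \<Sum>(j,P)\<leftarrow>ps. Fam j (v x) * P x) has_derivative
        (\<lambda>h. \<Sum>(j,P)\<leftarrow>ps. Fam (Suc j) (v x) * pd h v x * P x + Fam j (v x) * pd h P x)) (at x)"
    if "\<forall>(j,P)\<in>set ps. smooth P" for ps and x :: 'a
  proof -
    have "((\<lambda>x. \<Sum>p\<leftarrow>ps. (case p of (j,P) \<Rightarrow> Fam j (v x) * P x)) has_derivative
        (\<lambda>h. \<Sum>p\<leftarrow>ps. (case p of (j,P) \<Rightarrow> Fam (Suc j) (v x) * pd h v x * P x + Fam j (v x) * pd h P x))) (at x)"
      apply (rule hasd_sum_list)
      subgoal for p using that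
        apply (cases p)
        apply simp
        apply (rule has_derivative_eq_rhs[OF has_derivative_mult[OF fam_hasd[of Fam v, OF Fam v] smooth_hasd]])
        apply (auto simp: algebra_simps)
        done
      done
    then show ?thesis by (simp add: case_prod_unfold)
  qed
  have eqc: "(\<Sum>(j,P)\<leftarrow>ps. Fam (Suc j) (v x) * pd c v x * P x + Fam j (v x) * pd c P x) =
     (\<Sum>(j,P)\<leftarrow>concat (map (\<lambda>(j,P). [(Suc j, \<lambda>x. pd c v x * P x), (j, \<lambda>x. pd c P x)]) ps). Fam j (v x) * P x)"
    for ps and c x :: 'a
    by (induction ps) (auto simp: algebra_simps)
  show ?thesis
  proof (rule smooth_class[of C])
    fix w x assume "w \<in> C" then show "w differentiable (at x)"
      unfolding C_def using hd differentiableI by blast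
  next
    fix w and c :: 'a assume w: "w \<in> C" and c: "c \<in> Basis"
    then obtain ps where ps: "\<forall>(j,P)\<in>set ps. smooth P" "w = (\<lambda>x. \<Sum>(j,P)\<leftarrow>ps. Fam j (v x) * P x)"
      unfolding C_def by blast
    have "(\<lambda>x. pd c w x) = (\<lambda>x. \<Sum>(j,P)\<leftarrow>concat (map (\<lambda>(j,P). [(Suc j, \<lambda>x. pd c v x * P x), (j, \<lambda>x. pd c P x)]) ps). Fam j (v x) * P x)"
      using pd_eq[OF hd[OF ps(1)]] ps(2) eqc by auto
    moreover have "\<forall>(j,P)\<in>set (concat (map (\<lambda>(j,P). [(Suc j, \<lambda>x. pd c v x * P x), (j, \<lambda>x. pd c P x)]) ps)). smooth P"
      using ps(1) c by (auto intro: smooth_pd smooth_mult[OF smooth_pd[OF v]])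
    ultimately show "(\<lambda>x. pd c w x) \<in> C" unfolding C_def by blast
  next
    show "(\<lambda>x. Fam 0 (v x)) \<in> C" unfolding C_def
      by (intro CollectI exI[of _ "[(0, \<lambda>x. 1)]"]) (auto intro: smooth_const)
  qed
qed


lemma flat_hasd:
  fixes w :: "'a::real_normed_vector \<Rightarrow> real"
  assumes "w x = 0" "\<And>e. e > 0 \<Longrightarrow> eventually (\<lambda>y. \<bar>w y\<bar> \<le> e * norm (y - x)) (at x)"
  shows "(w has_derivative (\<lambda>_. 0)) (at x)"
  unfolding has_derivative_iff_norm
proof (intro conjI)
  show "bounded_linear (\<lambda>_. 0::real)" by simp
  show "((\<lambda>y. norm (w y - w x - 0) / norm (y - x)) \<longlongrightarrow> 0) (at x)"
  proof (rule tendstoI)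
    fix e :: real assume e: "e > 0"
    have ne: "eventually (\<lambda>y. y \<noteq> x) (at x)" unfolding eventually_at by (auto intro: exI[of _ 1])
    show "eventually (\<lambda>y. dist (norm (w y - w x - 0) / norm (y - x)) 0 < e) (at x)"
      using assms(2)[of "e/2"] e ne
    proof -
      have ev: "eventually (\<lambda>y. \<bar>w y\<bar> \<le> e/2 * norm (y - x)) (at x)" using assms(2)[of "e/2"] e by simp
      show ?thesis using ev ne
    proof (eventually_elim)
      case (elim y)
      then have "norm (y - x) > 0" by simp
      then have "\<bar>w y\<bar> / norm (y - x) \<le> e/2" using elim(1) by (simp add: divide_le_eq)
      then have "\<bar>w y\<bar> / norm (y - x) < e" using e by linarith
      then show ?case using assms(1) by simp
    qed
    qed
  qed
qed

lemma flat_class: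
  fixes C :: "('a::euclidean_space \<Rightarrow> real) set" and Z :: "'a set"
  assumes d: "\<And>w x. w \<in> C \<Longrightarrow> x \<notin> Z \<Longrightarrow> w differentiable (at x)"
  and z: "\<And>w x. w \<in> C \<Longrightarrow> x \<in> Z \<Longrightarrow> w x = 0"
  and fl: "\<And>w x e. w \<in> C \<Longrightarrow> x \<in> Z \<Longrightarrow> e > 0 \<Longrightarrow> eventually (\<lambda>y. \<bar>w y\<bar> \<le> e * norm (y - x)) (at x)"
  and p: "\<And>w b. w \<in> C \<Longrightarrow> b \<in> Basis \<Longrightarrow> (\<lambda>x. pd b w x) \<in> C"
  and w: "w \<in> C"
  shows "smooth w"
proof (rule smooth_class[of C])
  fix w x assume "w \<in> C"
  then show "w differentiable (at x)"
    using d flat_hasd[of w x] z fl differentiableI by (cases "x \<in> Z") blast+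
qed (use p w in auto)



fun Pp :: "nat \<Rightarrow> real poly" where
  "Pp 0 = 1"
| "Pp (Suc j) = [:0,0,1:] * (Pp j - pderiv (Pp j))"

definition Phi :: "nat \<Rightarrow> real \<Rightarrow> real" where
  "Phi j s = (if s \<le> 0 then 0 else poly (Pp j) (inverse s) * exp (- inverse s))"

lemma polyexp_lim: fixes p :: "real poly" shows "((\<lambda>u. poly p u / exp u) \<longlongrightarrow> 0) at_top"
proof -
  have "((\<lambda>u. \<Sum>i\<le>degree p. coeff p i * (u ^ i / exp u)) \<longlongrightarrow> (\<Sum>i\<le>degree p. coeff p i * 0)) at_top"
    using tendsto_power_div_exp_0 by (intro tendsto_sum tendsto_mult tendsto_const) auto
  then show ?thesis by (simp add: poly_altdef sum_divide_distrib)
qed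

lemma Phi_right: "((\<lambda>y. Phi j y / y) \<longlongrightarrow> 0) (at_right 0)"
proof -
  have "((\<lambda>y. poly (pCons 0 (Pp j)) (inverse y) / exp (inverse y)) \<longlongrightarrow> 0) (at_right 0)"
    by (rule filterlim_compose[OF polyexp_lim filterlim_inverse_at_top_right])
  moreover have "eventually (\<lambda>y. poly (pCons 0 (Pp j)) (inverse y) / exp (inverse y) = Phi j y / y) (at_right 0)"
    unfolding eventually_at_right_field
  proof (rule exI[of _ 1], intro conjI allI impI)
    fix y :: real assume y: "0 < y" "y < 1"
    have "poly (pCons 0 (Pp j)) (inverse y) / exp (inverse y) = inverse y * poly (Pp j) (inverse y) * inverse (exp (inverse y))"
      by (simp add: divide_inverse)
    also have "\<dots> = Phi j y / y" using y by (simp add: Phi_def exp_minus divide_inverse)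
    finally show "poly (pCons 0 (Pp j)) (inverse y) / exp (inverse y) = Phi j y / y" .
  qed simp
  ultimately show ?thesis by (rule Lim_transform_eventually)
qed

lemma Phi_left: "((\<lambda>y. Phi j y / y) \<longlongrightarrow> 0) (at_left 0)"
proof -
  have "eventually (\<lambda>y. 0 = Phi j y / y) (at_left (0::real))"
    unfolding eventually_at_left_field by (rule exI[of _ "-1"]) (auto simp: Phi_def)
  then show ?thesis by (rule Lim_transform_eventually[OF tendsto_const])
qed

lemma Phi_deriv: "(Phi j has_real_derivative Phi (Suc j) s) (at s)"
proof (cases "s = 0")
  case True
  have "((\<lambda>y. (Phi j y - Phi j 0) / (y - 0)) \<longlongrightarrow> 0) (at 0)"
    using Phi_left Phi_right filterlim_at_split by (simp add: Phi_def) blast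
  then show ?thesis using True by (simp add: has_field_derivative_iff Phi_def)
next
  case False
  show ?thesis
  proof (cases "s > 0")
    case True
    have d: "((\<lambda>s. poly (Pp j) (inverse s) * exp (- inverse s)) has_real_derivative
        poly (Pp (Suc j)) (inverse s) * exp (- inverse s)) (at s)"
    proof -
      have i: "(inverse has_real_derivative - (inverse s ^ Suc (Suc 0))) (at s)"
        using True by (intro DERIV_inverse) simp
      have p: "((\<lambda>s. poly (Pp j) (inverse s)) has_real_derivative
          poly (pderiv (Pp j)) (inverse s) * - (inverse s ^ Suc (Suc 0))) (at s)"
        by (rule DERIV_chain2[OF poly_DERIV i])
      have m: "((\<lambda>s. - inverse s) has_real_derivative (inverse s ^ Suc (Suc 0))) (at s)"
        using DERIV_minus[OF i] by simp
      have e: "((\<lambda>s. exp (- inverse s)) has_real_derivative exp (- inverse s) * (inverse s ^ Suc (Suc 0))) (at s)"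
        by (rule DERIV_chain2[OF DERIV_exp m])
      show ?thesis
        apply (rule DERIV_cong[OF DERIV_mult[OF p e]])
        apply (simp add: algebra_simps power2_eq_square)
        done
    qed
    have "Phi (Suc j) s = poly (Pp (Suc j)) (inverse s) * exp (- inverse s)" using True by (simp add: Phi_def)
    moreover have "(Phi j has_real_derivative poly (Pp (Suc j)) (inverse s) * exp (- inverse s)) (at s)"
      by (rule has_field_derivative_transform_within_open[OF d, of "{0<..}"]) (use True in \<open>auto simp: Phi_def\<close>)
    ultimately show ?thesis by simp
  next
    case False
    then have s: "s < 0" using \<open>s \<noteq> 0\<close> by simp
    have z: "((\<lambda>_. 0) has_real_derivative 0) (at s)" by simp
    have "(Phi j has_real_derivative 0) (at s)"
      by (rule has_field_derivative_transform_within_open[OF z, of "{..<0}"]) (use s in \<open>auto simp: Phi_def\<close>)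
    moreover have "Phi (Suc j) s = 0" using s by (simp add: Phi_def)
    ultimately show ?thesis by simp
  qed
qed


lemma polyexp_bounded:
  fixes p :: "real poly"
  shows "\<exists>B. \<forall>u\<ge>0. \<bar>poly p u / exp u\<bar> \<le> B"
proof -
  have "eventually (\<lambda>u. dist (poly p u / exp u) 0 < 1) at_top"
    using polyexp_lim[of p] tendstoD zero_less_one by blast
  then obtain U where U: "\<And>u. u \<ge> U \<Longrightarrow> \<bar>poly p u / exp u\<bar> < 1"
    unfolding eventually_at_top_linorder by auto
  have "continuous_on {0..U} (\<lambda>u. poly p u / exp u)"
    by (intro continuous_intros) auto
  then have "bounded ((\<lambda>u. poly p u / exp u) ` {0..U})"
    by (intro compact_imp_bounded compact_continuous_image compact_Icc)
  then obtain C0 where C0: "\<forall>x\<in>(\<lambda>u. poly p u / exp u) ` {0..U}. norm x \<le> C0"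
    unfolding bounded_iff by blast
  have C: "\<bar>poly p u / exp u\<bar> \<le> C0" if "u \<in> {0..U}" for u
    using C0 that by (metis image_eqI real_norm_def)
  show ?thesis
  proof (intro exI[of _ "max 1 C0"] allI impI)
    fix u :: real assume "u \<ge> 0"
    then show "\<bar>poly p u / exp u\<bar> \<le> max 1 C0"
    proof (cases "u \<ge> U")
      case True
      then have "\<bar>poly p u / exp u\<bar> < 1" by (rule U)
      then show ?thesis by (meson less_imp_le max.coboundedI1)
    next
      case False
      then have "\<bar>poly p u / exp u\<bar> \<le> C0" using C \<open>u \<ge> 0\<close> by simp
      then show ?thesis by (meson max.coboundedI2)
    qed
  qed
qed

lemma Phi_bounded: "\<exists>B. \<forall>s. \<bar>Phi j s\<bar> \<le> B"
proof -
  obtain B where B: "\<And>u. u \<ge> 0 \<Longrightarrow> \<bar>poly (Pp j) u / exp u\<bar> \<le> B"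
    using polyexp_bounded by blast
  show ?thesis
  proof (intro exI[of _ B] allI)
    fix s :: real
    show "\<bar>Phi j s\<bar> \<le> B"
    proof (cases "s \<le> 0")
      case True then show ?thesis using B[of 0] by (simp add: Phi_def)
    next
      case False
      then have "Phi j s = poly (Pp j) (inverse s) / exp (inverse s)"
        by (simp add: Phi_def exp_minus divide_inverse)
      then show ?thesis using B[of "inverse s"] False by simp
    qed
  qed
qed

lemma Phi0_pos: "s > 0 \<Longrightarrow> Phi 0 s > 0"
  by (simp add: Phi_def)

lemma Phi0_nonneg: "Phi 0 s \<ge> 0"
  by (simp add: Phi_def)

lemma Phi_nonpos: "s \<le> 0 \<Longrightarrow> Phi j s = 0"
  by (simp add: Phi_def)


lemma summable_geom_bound:
  fixes f :: "nat \<Rightarrow> real"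
  assumes "\<And>n. \<bar>f n\<bar> \<le> K * (1/2)^n"
  shows "summable f"
proof (rule summable_comparison_test'[where N=0])
  show "summable (\<lambda>n. K * (1/2)^n)" by (intro summable_mult summable_geometric) simp
qed (use assms in auto)

lemma theta_exists:
  fixes a :: "nat \<Rightarrow> real"
  assumes apos: "\<And>N. a N > 0"
  shows "\<exists>Th :: nat \<Rightarrow> real \<Rightarrow> real. (\<forall>j s. (Th j has_real_derivative Th (Suc j) s) (at s)) \<and>
     (\<forall>s>0. Th 0 s > 0) \<and> Th 0 0 = 0 \<and>
     (\<forall>j N s. j \<le> N \<longrightarrow> 0 < s \<longrightarrow> s \<le> (1/4)^N \<longrightarrow> \<bar>Th j s\<bar> \<le> 2 * a N)"
proof -
  define Bd where "Bd j = (SOME B. \<forall>s. \<bar>Phi j s\<bar> \<le> B)" for j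
  have Bd: "\<bar>Phi j s\<bar> \<le> Bd j" for j s
    unfolding Bd_def using someI_ex[OF Phi_bounded[of j]] by blast
  have Bd0: "0 \<le> Bd j" for j using Bd[of j 0] by linarith
  define Bc where "Bc i = (\<Sum>j\<le>i. Bd j)" for i
  have Bc0: "0 \<le> Bc i" for i unfolding Bc_def using Bd0 by (simp add: sum_nonneg)
  have Bc: "Bd j \<le> Bc N" if "j \<le> N" for j N
    unfolding Bc_def using that Bd0 by (intro member_le_sum) auto
  define e where "e i = min 1 (a i) / (1 + Bc i)" for i
  have e0: "0 < e i" for i unfolding e_def using apos[of i] Bc0[of i] by auto
  have e1: "e i \<le> 1" for i unfolding e_def using apos[of i] Bc0[of i] by (auto simp: divide_le_eq)
  have eB: "e N * Bc N \<le> a N" for N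
  proof -
    have "e N * Bc N = min 1 (a N) * (Bc N / (1 + Bc N))" unfolding e_def by simp
    also have "\<dots> \<le> min 1 (a N) * 1"
      using Bc0[of N] apos[of N] by (intro mult_left_mono) (auto simp: divide_le_eq)
    also have "\<dots> \<le> a N" by simp
    finally show ?thesis .
  qed
  define b where "b M = (1/2)^M * (\<Prod>i\<le>M. e i)" for M
  have b0: "0 < b M" for M unfolding b_def using e0 by (simp add: prod_pos)
  have pe: "(\<Prod>i\<le>M. e i) \<le> e N" if "N \<le> M" for N M
  proof -
    have "(\<Prod>i\<le>M. e i) = e N * (\<Prod>i\<in>{..M} - {N}. e i)"
      using that by (subst prod.remove[of _ N]) auto
    also have "\<dots> \<le> e N * 1"
      using e0 e1 by (intro mult_left_mono prod_le_1) (auto intro: less_imp_le)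
    finally show ?thesis by simp
  qed
  have b1: "b M \<le> (1/2)^M" for M
    unfolding b_def using e0 e1 by (auto intro!: mult_left_le prod_le_1 intro: less_imp_le)
  define t where "t M = ((1::real)/4)^M" for M
  define Th where "Th j s = (\<Sum>M. b M * Phi j (s - t M))" for j s
  have termb: "\<bar>b M * Phi j (s - t M)\<bar> \<le> Bd j * (1/2)^M" for M j s
  proof -
    have "\<bar>b M * Phi j (s - t M)\<bar> = b M * \<bar>Phi j (s - t M)\<bar>" using b0[of M] by (simp add: abs_mult)
    also have "\<dots> \<le> (1/2)^M * Bd j" using b1[of M] Bd[of j "s - t M"] b0[of M] Bd0[of j]
      by (intro mult_mono) auto
    finally show ?thesis by (simp add: mult.commute)
  qed
  have summ: "summable (\<lambda>M. b M * Phi j (s - t M))" for j s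
    by (rule summable_geom_bound[OF termb])
  have deriv: "(Th j has_real_derivative Th (Suc j) s) (at s)" for j s
  proof -
    have d: "((\<lambda>s. b n * Phi j (s - t n)) has_real_derivative b n * Phi (Suc j) (x - t n)) (at x within UNIV)" for n x
    proof -
      have "((\<lambda>s. s - t n) has_real_derivative 1) (at x)" by (auto intro!: derivative_eq_intros)
      from DERIV_chain2[OF Phi_deriv this] have "((\<lambda>s. Phi j (s - t n)) has_real_derivative Phi (Suc j) (x - t n)) (at x)"
        by simp
      then show ?thesis by (auto intro!: derivative_eq_intros)
    qed
    have u: "uniformly_convergent_on UNIV (\<lambda>n x. \<Sum>i<n. b i * Phi (Suc j) (x - t i))"
      by (rule Weierstrass_m_test'[where M="\<lambda>n. Bd (Suc j) * (1/2)^n"])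
         (use termb in \<open>auto intro!: summable_mult summable_geometric\<close>)
    have "((\<lambda>x. \<Sum>n. b n * Phi j (x - t n)) has_field_derivative (\<Sum>n. b n * Phi (Suc j) (s - t n))) (at s)"
      by (rule has_field_derivative_series'(2)[OF convex_UNIV d u _ summ[of j 0]]) auto
    then show ?thesis unfolding Th_def by simp
  qed
  have pos: "Th 0 s > 0" if sp: "s > 0" for s
  proof -
    obtain M where M: "((1::real)/4)^M < s" using real_arch_pow_inv[OF sp, of "1/4"] by auto
    show ?thesis unfolding Th_def
    proof (rule suminf_pos2[OF summ])
      show "0 \<le> b n * Phi 0 (s - t n)" for n using b0[of n] Phi0_nonneg by simp
      show "0 < b M * Phi 0 (s - t M)" using b0[of M] Phi0_pos[of "s - t M"] M by (simp add: t_def)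
    qed
  qed
  have z: "Th 0 0 = 0" unfolding Th_def
    by (simp add: Phi_nonpos t_def)
  have bound: "\<bar>Th j s\<bar> \<le> 2 * a N" if jN: "j \<le> N" and s: "0 < s" "s \<le> (1/4)^N" for j N s
  proof -
    have tb: "\<bar>b M * Phi j (s - t M)\<bar> \<le> (1/2)^M * a N" for M
    proof (cases "M \<le> N")
      case True
      have "t N \<le> t M" unfolding t_def using True by (intro power_decreasing) auto
      then have "s - t M \<le> 0" using s unfolding t_def by linarith
      then show ?thesis using apos[of N] by (simp add: Phi_nonpos)
    next
      case False
      have "\<bar>b M * Phi j (s - t M)\<bar> = b M * \<bar>Phi j (s - t M)\<bar>" using b0[of M] by (simp add: abs_mult)
      also have "\<dots> \<le> ((1/2)^M * e N) * Bc N"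
        unfolding b_def
        using pe[of N M] False Bd[of j "s - t M"] Bc[OF jN] Bd0[of j] e0 
        by (intro mult_mono) (auto intro!: mult_left_mono prod_nonneg intro: less_imp_le)
      also have "\<dots> = (1/2)^M * (e N * Bc N)" by simp
      also have "\<dots> \<le> (1/2)^M * a N" using eB[of N] by (intro mult_left_mono) auto
      finally show ?thesis .
    qed
    have sg: "summable (\<lambda>M. (1/2::real)^M * a N)" by (intro summable_mult2 summable_geometric) simp
    have sa: "summable (\<lambda>M. \<bar>b M * Phi j (s - t M)\<bar>)"
      by (rule summable_comparison_test'[OF sg, where N=0]) (use tb in simp)
    have "\<bar>Th j s\<bar> \<le> (\<Sum>M. \<bar>b M * Phi j (s - t M)\<bar>)"
      unfolding Th_def using summable_norm[of "\<lambda>M. b M * Phi j (s - t M)"] sa by simp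
    also have "\<dots> \<le> (\<Sum>M. (1/2::real)^M * a N)"
      by (rule suminf_le[OF tb sa sg])
    also have "\<dots> = 2 * a N"
      using suminf_mult2[OF summable_geometric[of "1/2::real"]] suminf_geometric[of "1/2::real"] by simp
    finally show ?thesis .
  qed
  show ?thesis
    by (rule exI[of _ Th]) (use deriv pos z bound in auto)
qed


lemma quarter_split_aux:
  fixes s :: real
  shows "s \<le> (1/4)^N \<Longrightarrow> (1/4)^(N+d) < s \<Longrightarrow> \<exists>M\<ge>N. (1/4)^(Suc M) < s \<and> s \<le> (1/4)^M"
proof (induction d arbitrary: N)
  case 0
  then show ?case by simp
next
  case (Suc d)
  show ?case
  proof (cases "(1/4::real)^(Suc N) < s")
    case True
    then show ?thesis using Suc.prems by blast
  next
    case False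
    then have "s \<le> (1/4)^(Suc N)" by simp
    moreover have "(1/4::real)^(Suc N + d) < s" using Suc.prems(2) by simp
    ultimately obtain M where "M \<ge> Suc N" "(1/4)^(Suc M) < s \<and> s \<le> (1/4)^M"
      using Suc.IH by blast
    then show ?thesis by (intro exI[of _ M]) auto
  qed
qed

lemma quarter_split:
  fixes s :: real
  assumes "0 < s" "s \<le> (1/4)^N"
  shows "\<exists>M\<ge>N. (1/4)^(Suc M) < s \<and> s \<le> (1/4)^M"
proof -
  obtain K where K: "(1/4::real)^K < s" using real_arch_pow_inv[OF assms(1), of "1/4"] by auto
  have "(1/4::real)^(N+K) \<le> (1/4)^K" by (intro power_decreasing) auto
  then have "(1/4::real)^(N+K) < s" using K by linarith
  then show ?thesis using quarter_split_aux[OF assms(2), of K] by blast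
qed

lemma lip_at:
  fixes k :: "'a::real_normed_vector \<Rightarrow> real"
  assumes "k differentiable (at p)" "k p = 0"
  shows "\<exists>L>0. eventually (\<lambda>q. \<bar>k q\<bar> \<le> L * norm (q - p)) (at p)"
proof -
  obtain D where D: "(k has_derivative D) (at p)" using assms(1) unfolding differentiable_def by blast
  then have bl: "bounded_linear D" and lim: "((\<lambda>y. norm ((k y - k p) - D (y - p)) / norm (y - p)) \<longlongrightarrow> 0) (at p)"
    unfolding has_derivative_iff_norm by auto
  obtain K where K: "K > 0" "\<And>x. norm (D x) \<le> norm x * K" using bounded_linear.pos_bounded[OF bl] by blast
  have ev: "eventually (\<lambda>y. dist (norm ((k y - k p) - D (y - p)) / norm (y - p)) 0 < 1) (at p)"
    using tendstoD[OF lim zero_less_one] .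
  have ne: "eventually (\<lambda>y. y \<noteq> p) (at p)" unfolding eventually_at by (auto intro: exI[of _ 1])
  show ?thesis
  proof (intro exI[of _ "K + 1"] conjI)
    show "K + 1 > 0" using K by simp
    show "eventually (\<lambda>q. \<bar>k q\<bar> \<le> (K + 1) * norm (q - p)) (at p)"
      using ev ne
    proof eventually_elim
      case (elim y)
      then have np: "norm (y - p) > 0" by simp
      from elim(1) have "norm ((k y - k p) - D (y - p)) < norm (y - p)"
        using np by (simp add: divide_less_eq)
      then have "\<bar>k y - D (y - p)\<bar> < norm (y - p)" using assms(2) by simp
      moreover have "\<bar>D (y - p)\<bar> \<le> norm (y - p) * K" using K(2)[of "y - p"] by simp
      ultimately show ?case by (simp add: algebra_simps)
    qed
  qed
qed


lemma flat_term:
  fixes Th :: "nat \<Rightarrow> real \<Rightarrow> real" and f k P :: "'a::real_normed_vector \<Rightarrow> real" and c :: "nat \<Rightarrow> real"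
  assumes Thb: "\<And>j N s. j \<le> N \<Longrightarrow> 0 < s \<Longrightarrow> s \<le> (1/4)^N \<Longrightarrow> \<bar>Th j s\<bar> \<le> 2 * ((1/4)^N * c (Suc N) ^ N)"
  and c0: "\<And>N. 0 < c N" and c1: "\<And>N. c N \<le> 1"
  and cf: "\<And>N q. norm q \<le> real N \<Longrightarrow> (1/4)^N \<le> k q * k q \<Longrightarrow> c N \<le> \<bar>f q\<bar>"
  and kd: "k differentiable (at p)" and kp: "k p = 0" and Pc: "isCont P p"
  and e: "\<epsilon> > 0"
  shows "eventually (\<lambda>q. k q \<noteq> 0 \<longrightarrow> \<bar>Th j (k q * k q) * P q * inverse (f q) ^ m\<bar> \<le> \<epsilon> * norm (q - p)) (at p)"
proof -
  obtain L where L: "L > 0" and evL: "eventually (\<lambda>q. \<bar>k q\<bar> \<le> L * norm (q - p)) (at p)"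
    using lip_at[OF kd kp] by blast
  define B where "B = \<bar>P p\<bar> + 1"
  have B0: "B > 0" unfolding B_def by simp
  have evP: "eventually (\<lambda>q. \<bar>P q\<bar> \<le> B) (at p)"
  proof -
    have "eventually (\<lambda>q. dist (P q) (P p) < 1) (at p)"
      using tendstoD[OF Pc[unfolded isCont_def] zero_less_one] .
    then show ?thesis by eventually_elim (auto simp: B_def dist_real_def)
  qed
  have "0 < \<epsilon> / (4 * B * L)" using e B0 L by simp
  then obtain n0 where n0: "(1/2::real)^n0 < \<epsilon> / (4 * B * L)"
    using real_arch_pow_inv[of "\<epsilon> / (4 * B * L)" "1/2"] by auto
  define N0 where "N0 = max (max n0 (max j m)) (nat \<lceil>norm p + 1\<rceil>)"
  have evN: "eventually (\<lambda>q. norm q \<le> norm p + 1) (at p)"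
  proof -
    have "eventually (\<lambda>q. dist q p < 1) (at p)"
      using tendstoD[OF tendsto_ident_at zero_less_one] .
    then show ?thesis
    proof eventually_elim
      case (elim q)
      have "norm q \<le> norm p + norm (q - p)" using norm_triangle_ineq[of p "q - p"] by simp
      then show ?case using elim by (simp add: dist_norm)
    qed
  qed
  have evK: "eventually (\<lambda>q. k q * k q \<le> (1/4)^N0) (at p)"
  proof -
    have "isCont k p" using differentiable_imp_continuous_within[OF kd] by (simp add: continuous_at)
    then have "((\<lambda>q. k q * k q) \<longlongrightarrow> 0) (at p)"
      using tendsto_mult[of k 0 "at p" k 0] kp unfolding isCont_def by simp
    from tendstoD[OF this, of "(1/4)^N0"] have "eventually (\<lambda>q. dist (k q * k q) 0 < (1/4)^N0) (at p)"
      by simp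
    then show ?thesis by eventually_elim (simp add: dist_real_def)
  qed
  show ?thesis
    using evL evP evN evK
  proof eventually_elim
    case (elim q)
    show ?case
    proof
      assume kq: "k q \<noteq> 0"
      define s where "s = k q * k q"
      have s0: "0 < s" unfolding s_def using kq by (auto simp: zero_less_mult_iff linorder_neq_iff)
      have sN0: "s \<le> (1/4)^N0" unfolding s_def using elim(4) .
      obtain M where M: "M \<ge> N0" "(1/4)^(Suc M) < s" "s \<le> (1/4)^M"
        using quarter_split[OF s0 sN0] by blast
      have "norm q \<le> real (Suc M)"
      proof -
        have "norm p + 1 \<le> real (nat \<lceil>norm p + 1\<rceil>)" by linarith
        also have "\<dots> \<le> real N0" unfolding N0_def by simp
        also have "\<dots> \<le> real (Suc M)" using M(1) by simp
        finally show ?thesis using elim(3) by simp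
      qed
      define C where "C = c (Suc M)"
      have C0: "0 < C" and C1: "C \<le> 1" unfolding C_def using c0 c1 by auto
      have Cf: "C \<le> \<bar>f q\<bar>" unfolding C_def
        using cf[OF \<open>norm q \<le> real (Suc M)\<close>] M(2) unfolding s_def by simp
      have jM: "j \<le> M" and mM: "m \<le> M" and nM: "n0 \<le> M" using M(1) unfolding N0_def by auto
      have Thq: "\<bar>Th j s\<bar> \<le> 2 * ((1/4)^M * C ^ M)" unfolding C_def using Thb[OF jM s0 M(3)] .
      have fq0: "f q \<noteq> 0" using Cf C0 by auto
      have inv: "\<bar>inverse (f q) ^ m\<bar> \<le> inverse (C ^ m)"
      proof -
        have "C ^ m \<le> \<bar>f q\<bar> ^ m" using Cf C0 by (intro power_mono) auto
        then have "inverse (\<bar>f q\<bar> ^ m) \<le> inverse (C ^ m)" using C0 by (intro le_imp_inverse_le) auto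
        then show ?thesis by (simp add: power_abs power_inverse abs_inverse)
      qed
      have CM: "C ^ M * inverse (C ^ m) \<le> 1"
      proof -
        have "C ^ M \<le> C ^ m" using C0 C1 mM by (intro power_decreasing) auto
        then show ?thesis using C0 by (simp add: field_simps)
      qed
      have "\<bar>Th j s * P q * inverse (f q) ^ m\<bar> = \<bar>Th j s\<bar> * \<bar>inverse (f q) ^ m\<bar> * \<bar>P q\<bar>"
        by (simp add: abs_mult)
      also have "\<dots> \<le> (2 * ((1/4)^M * C ^ M)) * inverse (C ^ m) * B"
        using Thq inv elim(2) C0 by (intro mult_mono) auto
      also have "\<dots> = 2 * (1/4)^M * B * (C ^ M * inverse (C ^ m))" by simp
      also have "\<dots> \<le> 2 * (1/4)^M * B * 1" using CM B0 by (intro mult_left_mono) auto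
      finally have T1: "\<bar>Th j s * P q * inverse (f q) ^ m\<bar> \<le> 2 * (1/4)^M * B" by simp
      have kbig: "(1/2::real)^(Suc M) < \<bar>k q\<bar>"
      proof (rule ccontr)
        assume "\<not> ?thesis"
        then have "\<bar>k q\<bar> \<le> (1/2)^(Suc M)" by simp
        then have "\<bar>k q\<bar> * \<bar>k q\<bar> \<le> (1/2)^(Suc M) * (1/2::real)^(Suc M)"
          by (intro mult_mono) auto
        also have "\<dots> = (1/4)^(Suc M)" by (simp add: power_mult_distrib[symmetric])
        finally show False using M(2) unfolding s_def by (simp add: abs_mult[symmetric])
      qed
      have q4: "(1/4::real)^M = 2 * (1/2)^M * (1/2)^(Suc M)"
        by (simp add: power_mult_distrib[symmetric])
      have "(1/4::real)^M \<le> 2 * (1/2)^M * (L * norm (q - p))"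
        unfolding q4 using kbig elim(1) by (intro mult_left_mono) auto
      also have "\<dots> \<le> 2 * (1/2)^n0 * (L * norm (q - p))"
        using nM L by (intro mult_right_mono mult_left_mono power_decreasing) auto
      finally have q4b: "(1/4::real)^M \<le> 2 * (1/2)^n0 * (L * norm (q - p))" .
      have "\<bar>Th j s * P q * inverse (f q) ^ m\<bar> \<le> 2 * (2 * (1/2)^n0 * (L * norm (q - p))) * B"
        using T1 q4b B0 by (smt (verit) mult_right_mono)
      also have "\<dots> = (4 * B * L) * (1/2)^n0 * norm (q - p)" by simp
      also have "\<dots> \<le> (4 * B * L) * (\<epsilon> / (4 * B * L)) * norm (q - p)"
        using n0 B0 L by (intro mult_right_mono mult_left_mono) auto
      also have "\<dots> = \<epsilon> * norm (q - p)" using B0 L by simp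
      finally show "\<bar>Th j (k q * k q) * P q * inverse (f q) ^ m\<bar> \<le> \<epsilon> * norm (q - p)"
        unfolding s_def .
    qed
  qed
qed


lemma smooth_cmult: "smooth g \<Longrightarrow> smooth (\<lambda>x. c * g x)"
  using smooth_mult[OF smooth_const] by blast

lemma smooth_neg: "smooth g \<Longrightarrow> smooth (\<lambda>x. - g x)"
  using smooth_cmult[of g "-1"] by simp

lemma pow_id: "of_nat m * (- (i * d * i)) * i ^ (m - 1) = - (of_nat m) * d * (i::real) ^ Suc m"
  by (cases m) (auto simp: algebra_simps)

lemma g_class_smooth:
  fixes f k :: "'a::euclidean_space \<Rightarrow> real" and Th :: "nat \<Rightarrow> real \<Rightarrow> real" and Z :: "'a set"
    and c :: "nat \<Rightarrow> real"
  assumes f: "smooth f" and k: "smooth k"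
  and Thd: "\<And>j s. (Th j has_real_derivative Th (Suc j) s) (at s)"
  and Thb: "\<And>j N s. j \<le> N \<Longrightarrow> 0 < s \<Longrightarrow> s \<le> (1/4)^N \<Longrightarrow> \<bar>Th j s\<bar> \<le> 2 * ((1/4)^N * c (Suc N) ^ N)"
  and c0: "\<And>N. 0 < c N" and c1: "\<And>N. c N \<le> 1"
  and cf: "\<And>N q. norm q \<le> real N \<Longrightarrow> (1/4)^N \<le> k q * k q \<Longrightarrow> c N \<le> \<bar>f q\<bar>"
  and Zc: "closed Z" and kZ: "\<And>q. q \<in> Z \<longleftrightarrow> k q = 0" and fZ: "\<And>q. q \<notin> Z \<Longrightarrow> f q \<noteq> 0"
  shows "smooth (\<lambda>q. if q \<in> Z then 0 else Th 0 (k q * k q) * inverse (f q))"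
proof -
  define u where "u q = k q * k q" for q
  have u: "smooth u" unfolding u_def[abs_def] using smooth_mult[OF k k] .
  define G :: "(nat \<times> ('a \<Rightarrow> real) \<times> nat) list \<Rightarrow> 'a \<Rightarrow> real" where
    "G ts q = (\<Sum>(j,P,m)\<leftarrow>ts. Th j (u q) * P q * inverse (f q) ^ m)" for ts q
  define gw where "gw ts q = (if q \<in> Z then 0 else G ts q)" for ts q
  define dl :: "'a \<Rightarrow> (nat \<times> ('a \<Rightarrow> real) \<times> nat) list \<Rightarrow> (nat \<times> ('a \<Rightarrow> real) \<times> nat) list" where
    "dl c ts = concat (map (\<lambda>(j,P,m). [(Suc j, \<lambda>q. pd c u q * P q, m), (j, pd c P, m),
        (j, \<lambda>q. - of_nat m * pd c f q * P q, Suc m)]) ts)" for c ts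
  define C where "C = {w. \<exists>ts. (\<forall>(j,P,m)\<in>set ts. smooth P) \<and> w = gw ts}"
  have hdG: "(G ts has_derivative (\<lambda>h. \<Sum>(j,P,m)\<leftarrow>ts. Th (Suc j) (u q) * pd h u q * P q * inverse (f q) ^ m
       + Th j (u q) * pd h P q * inverse (f q) ^ m
       + Th j (u q) * P q * (- of_nat m * pd h f q * inverse (f q) ^ Suc m))) (at q)"
    if ts: "\<forall>(j,P,m)\<in>set ts. smooth P" and fq: "f q \<noteq> 0" for ts q
  proof -
    have "((\<lambda>q. \<Sum>p\<leftarrow>ts. (case p of (j,P,m) \<Rightarrow> Th j (u q) * P q * inverse (f q) ^ m)) has_derivative
        (\<lambda>h. \<Sum>p\<leftarrow>ts. (case p of (j,P,m) \<Rightarrow> Th (Suc j) (u q) * pd h u q * P q * inverse (f q) ^ m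
       + Th j (u q) * pd h P q * inverse (f q) ^ m
       + Th j (u q) * P q * (- of_nat m * pd h f q * inverse (f q) ^ Suc m)))) (at q)"
    proof (rule hasd_sum_list)
      fix p assume p: "p \<in> set ts"
      obtain j P m where pe: "p = (j,P,m)" by (cases p) auto
      have P: "smooth P" using ts p pe by auto
      have d1: "((\<lambda>q. Th j (u q)) has_derivative (\<lambda>h. Th (Suc j) (u q) * pd h u q)) (at q)"
        by (rule fam_hasd[of Th u, OF Thd u])
      have d3: "((\<lambda>q. inverse (f q) ^ m) has_derivative
          (\<lambda>h. of_nat m * (- (inverse (f q) * pd h f q * inverse (f q))) * inverse (f q) ^ (m - 1))) (at q)"
        by (rule has_derivative_power[OF Deriv.has_derivative_inverse[OF fq smooth_hasd[OF f]]])
      have d3': "((\<lambda>q. inverse (f q) ^ m) has_derivative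
          (\<lambda>h. - of_nat m * pd h f q * inverse (f q) ^ Suc m)) (at q)"
        by (rule has_derivative_eq_rhs[OF d3]) (simp only: pow_id)
      have "((\<lambda>q. Th j (u q) * P q * inverse (f q) ^ m) has_derivative
          (\<lambda>h. Th (Suc j) (u q) * pd h u q * P q * inverse (f q) ^ m
       + Th j (u q) * pd h P q * inverse (f q) ^ m
       + Th j (u q) * P q * (- of_nat m * pd h f q * inverse (f q) ^ Suc m))) (at q)"
        apply (rule has_derivative_eq_rhs[OF has_derivative_mult[OF has_derivative_mult[OF d1 smooth_hasd[OF P]] d3']])
        apply (simp add: fun_eq_iff algebra_simps)
        done
      then show "((\<lambda>q. case p of (j,P,m) \<Rightarrow> Th j (u q) * P q * inverse (f q) ^ m) has_derivative
        (\<lambda>h. case p of (j,P,m) \<Rightarrow> Th (Suc j) (u q) * pd h u q * P q * inverse (f q) ^ m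
       + Th j (u q) * pd h P q * inverse (f q) ^ m
       + Th j (u q) * P q * (- of_nat m * pd h f q * inverse (f q) ^ Suc m))) (at q)"
        using pe by simp
    qed
    then show ?thesis unfolding G_def by (simp add: case_prod_unfold)
  qed
  have eqG: "(\<Sum>(j,P,m)\<leftarrow>ts. Th (Suc j) (u q) * pd h u q * P q * inverse (f q) ^ m
       + Th j (u q) * pd h P q * inverse (f q) ^ m
       + Th j (u q) * P q * (- of_nat m * pd h f q * inverse (f q) ^ Suc m))
     = G (dl h ts) q" for ts h q
    unfolding G_def dl_def by (induction ts) (auto simp: algebra_simps)
  have openW: "open (- Z)" using Zc by auto
  have hdgw: "(gw ts has_derivative (\<lambda>h. G (dl h ts) q)) (at q)"
    if ts: "\<forall>(j,P,m)\<in>set ts. smooth P" and q: "q \<notin> Z" for ts q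
  proof -
    have "(G ts has_derivative (\<lambda>h. G (dl h ts) q)) (at q)"
      using hdG[OF ts fZ[OF q]] eqG by simp
    then show ?thesis
      by (rule has_derivative_transform_within_open[OF _ openW]) (use q in \<open>auto simp: gw_def\<close>)
  qed
  have flat: "eventually (\<lambda>q. q \<notin> Z \<longrightarrow> \<bar>G ts q\<bar> \<le> e * norm (q - p)) (at p)"
    if ts: "\<forall>(j,P,m)\<in>set ts. smooth P" and p: "p \<in> Z" and e: "e > 0" for ts p e
    using ts e
  proof (induction ts arbitrary: e)
    case Nil
    then show ?case by (simp add: G_def)
  next
    case (Cons t ts)
    obtain j P m where te: "t = (j,P,m)" by (cases t) auto
    have P: "smooth P" using Cons.prems te by auto
    have Pc: "isCont P p" using smooth_cont[OF P] by (simp add: continuous_on_eq_continuous_at)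
    have e2: "e/2 > 0" using Cons.prems by simp
    have ev1: "eventually (\<lambda>q. k q \<noteq> 0 \<longrightarrow> \<bar>Th j (k q * k q) * P q * inverse (f q) ^ m\<bar> \<le> e/2 * norm (q - p)) (at p)"
      by (rule flat_term[OF Thb c0 c1 cf smooth_diff[OF k] _ Pc e2]) (use p kZ in auto)
    have ev2: "eventually (\<lambda>q. q \<notin> Z \<longrightarrow> \<bar>G ts q\<bar> \<le> e/2 * norm (q - p)) (at p)"
    proof -
      have "\<forall>(j,P,m)\<in>set ts. smooth P" using Cons.prems by auto
      from Cons.IH[OF this e2] show ?thesis .
    qed
    show ?case using ev1 ev2
    proof eventually_elim
      case (elim q)
      show ?case
      proof
        assume q: "q \<notin> Z"
        then have kq: "k q \<noteq> 0" using kZ by auto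
        have "G (t # ts) q = Th j (u q) * P q * inverse (f q) ^ m + G ts q"
          unfolding G_def te by simp
        then show "\<bar>G (t # ts) q\<bar> \<le> e * norm (q - p)"
          using elim kq q unfolding u_def by auto
      qed
    qed
  qed
  show ?thesis
  proof (rule flat_class[of C Z])
    fix w q assume "w \<in> C" "q \<notin> Z"
    then show "w differentiable (at q)" unfolding C_def using hdgw differentiableI by blast
  next
    fix w q assume "w \<in> C" "q \<in> Z"
    then show "w q = 0" unfolding C_def gw_def by auto
  next
    fix w p e assume w: "w \<in> C" and p: "p \<in> Z" and e: "(e::real) > 0"
    then obtain ts where ts: "\<forall>(j,P,m)\<in>set ts. smooth P" "w = gw ts" unfolding C_def by blast
    show "eventually (\<lambda>y. \<bar>w y\<bar> \<le> e * norm (y - p)) (at p)"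
      using flat[OF ts(1) p e] e by (auto elim!: eventually_mono simp: ts(2) gw_def)
  next
    fix w and h :: 'a assume w: "w \<in> C" and h: "h \<in> Basis"
    then obtain ts where ts: "\<forall>(j,P,m)\<in>set ts. smooth P" "w = gw ts" unfolding C_def by blast
    have H3: "smooth (\<lambda>q. - (real m * pd h f q * P q))" if "smooth P" for P m
      by (rule smooth_neg[OF smooth_mult[OF smooth_cmult[OF smooth_pd[OF f h]] that]])
    have H1: "smooth (\<lambda>q. pd h u q * P q)" if "smooth P" for P
      by (rule smooth_mult[OF smooth_pd[OF u h] that])
    have ts': "\<forall>(j,P,m)\<in>set (dl h ts). smooth P"
      using ts(1) h H1 H3 unfolding dl_def
      by (auto intro!: smooth_mult smooth_pd u f smooth_const)
    have "pd h w q = gw (dl h ts) q" for q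
    proof (cases "q \<in> Z")
      case True
      have z: "w q = 0" using True ts(2) gw_def by simp
      have "(w has_derivative (\<lambda>_. 0)) (at q)"
      proof (rule flat_hasd[of w q, OF z])
        fix e :: real assume "e > 0"
        then show "eventually (\<lambda>y. \<bar>w y\<bar> \<le> e * norm (y - q)) (at q)"
          using flat[OF ts(1) True \<open>e > 0\<close>] \<open>e > 0\<close> by (auto elim!: eventually_mono simp: ts(2) gw_def)
      qed
      then show ?thesis using pd_eq True by (simp add: gw_def)
    next
      case False
      then show ?thesis using pd_eq[OF hdgw[OF ts(1) False]] ts(2) by (simp add: gw_def)
    qed
    then have "(\<lambda>q. pd h w q) = gw (dl h ts)" by auto
    then show "(\<lambda>q. pd h w q) \<in> C" unfolding C_def using ts' by blast
  next
    have "(\<lambda>q. if q \<in> Z then 0 else Th 0 (k q * k q) * inverse (f q)) = gw [(0, \<lambda>_. 1, 1)]"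
      by (auto simp: gw_def G_def u_def)
    then show "(\<lambda>q. if q \<in> Z then 0 else Th 0 (k q * k q) * inverse (f q)) \<in> C"
      unfolding C_def using smooth_const[of 1]
      by (intro CollectI exI[of _ "[(0, \<lambda>_. 1, 1)]"]) auto
  qed
qed


theorem lemma2p9:
  fixes V :: "(real^'m) set" and f :: "(real^'m) \<times> (real^'n) \<Rightarrow> real"
  assumes "closed V" and "smooth f" and "f -` {0} = fst -` V"
  shows "\<exists>(g :: (real^'m) \<times> (real^'n) \<Rightarrow> real) (h :: real^'m \<Rightarrow> real).
           smooth g \<and> smooth h \<and> h \<circ> fst = (\<lambda>z. f z * g z) \<and> g -` {0} = fst -` V"
proof -
  note V = assms(1) and f = assms(2)
  have fz: "f z = 0 \<longleftrightarrow> fst z \<in> V" for z using assms(3) by blast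
  define kf where "kf x = f (x, 0)" for x
  have lin1: "linear (\<lambda>x::real^'m. (x, 0::real^'n))" by (rule bounded_linear.linear) (rule bounded_linear_Pair[OF bounded_linear_ident bounded_linear_zero])
  have kf: "smooth kf" unfolding kf_def[abs_def]
    by (rule smooth_lin[OF lin1 _ f]) (auto simp: Basis_prod_def)
  have lin2: "linear (fst :: (real^'m) \<times> (real^'n) \<Rightarrow> real^'m)" by (rule bounded_linear.linear) (rule bounded_linear_fst)
  define k where "k q = kf (fst q)" for q :: "(real^'m) \<times> (real^'n)"
  have k: "smooth k" unfolding k_def[abs_def]
    by (rule smooth_lin[OF lin2 _ kf]) (auto simp: Basis_prod_def)
  define Z :: "((real^'m) \<times> (real^'n)) set" where "Z = fst -` V"
  have Zc: "closed Z" unfolding Z_def using V by (rule closed_vimage_fst)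
  have kZ: "q \<in> Z \<longleftrightarrow> k q = 0" for q unfolding Z_def k_def kf_def using fz[of "(fst q, 0)"] by simp
  have fZ: "q \<notin> Z \<Longrightarrow> f q \<noteq> 0" for q unfolding Z_def using fz by simp
  have fc: "continuous_on UNIV f" using smooth_cont[OF f] .
  have kc: "continuous_on UNIV k" using smooth_cont[OF k] .
  have cex: "\<exists>c. 0 < c \<and> c \<le> 1 \<and> (\<forall>q. norm q \<le> real N \<longrightarrow> (1/4)^N \<le> k q * k q \<longrightarrow> c \<le> \<bar>f q\<bar>)" for N
  proof -
    define S where "S = cball 0 (real N) \<inter> {q. (1/4)^N \<le> k q * k q}"
    have "closed {q. (1/4::real)^N \<le> k q * k q}"
      by (rule closed_Collect_le) (auto intro!: continuous_intros kc)
    then have cS: "compact S" unfolding S_def by (intro compact_Int_closed) auto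
    show ?thesis
    proof (cases "S = {}")
      case True
      then show ?thesis by (intro exI[of _ 1]) (auto simp: S_def)
    next
      case False
      have "continuous_on S (\<lambda>q. \<bar>f q\<bar>)"
        by (intro continuous_intros continuous_on_subset[OF fc]) auto
      from continuous_attains_inf[OF cS False this] obtain q0 where q0: "q0 \<in> S" "\<And>q. q \<in> S \<Longrightarrow> \<bar>f q0\<bar> \<le> \<bar>f q\<bar>"
        by blast
      have "(1/4::real)^N > 0" by simp
      moreover have "(1/4::real)^N \<le> k q0 * k q0" using q0(1) unfolding S_def by auto
      ultimately have "k q0 \<noteq> 0" by (metis mult_zero_left not_le)
      then have "f q0 \<noteq> 0" using fZ kZ by blast
      show ?thesis
      proof (intro exI[of _ "min 1 \<bar>f q0\<bar>"] conjI allI impI)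
        show "0 < min 1 \<bar>f q0\<bar>" using \<open>f q0 \<noteq> 0\<close> by simp
        show "min 1 \<bar>f q0\<bar> \<le> 1" by simp
        fix q assume "norm q \<le> real N" "(1/4)^N \<le> k q * k q"
        then have "q \<in> S" unfolding S_def by simp
        then have "\<bar>f q0\<bar> \<le> \<bar>f q\<bar>" by (rule q0(2))
        then show "min 1 \<bar>f q0\<bar> \<le> \<bar>f q\<bar>" by simp
      qed
    qed
  qed
  then obtain c where c: "\<And>N. 0 < c N" "\<And>N. c N \<le> 1"
    "\<And>N q. norm q \<le> real N \<Longrightarrow> (1/4)^N \<le> k q * k q \<Longrightarrow> c N \<le> \<bar>f q\<bar>"
    by metis
  have apos: "0 < (1/4)^N * c (Suc N) ^ N" for N using c(1) by simp
  obtain Th :: "nat \<Rightarrow> real \<Rightarrow> real" where Thd: "\<And>j s. (Th j has_real_derivative Th (Suc j) s) (at s)"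
    and Thp: "\<And>s. s > 0 \<Longrightarrow> Th 0 s > 0" and Th0: "Th 0 0 = 0"
    and Thb: "\<And>j N s. j \<le> N \<Longrightarrow> 0 < s \<Longrightarrow> s \<le> (1/4)^N \<Longrightarrow> \<bar>Th j s\<bar> \<le> 2 * ((1/4)^N * c (Suc N) ^ N)"
    using theta_exists[of "\<lambda>N. (1/4)^N * c (Suc N) ^ N", OF apos] by blast
  define g where "g q = (if q \<in> Z then 0 else Th 0 (k q * k q) * inverse (f q))" for q
  define h where "h x = Th 0 (kf x * kf x)" for x
  have gs: "smooth g" unfolding g_def[abs_def]
    by (rule g_class_smooth[of f k Th c Z, OF f k Thd Thb c Zc kZ fZ])
  have hs: "smooth h" unfolding h_def[abs_def]
    by (rule smooth_fam[of Th, OF Thd smooth_mult[OF kf kf]])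
  have hf: "h \<circ> fst = (\<lambda>z. f z * g z)"
  proof
    fix q
    show "(h \<circ> fst) q = f q * g q"
    proof (cases "q \<in> Z")
      case True
      then show ?thesis using kZ[of q] Th0 fz[of q] by (simp add: h_def g_def k_def Z_def)
    next
      case False
      then show ?thesis using fZ[OF False] by (simp add: h_def g_def k_def)
    qed
  qed
  have gz: "g -` {0} = fst -` V"
  proof (intro set_eqI iffI)
    fix q assume q: "q \<in> g -` {0}"
    show "q \<in> fst -` V"
    proof (rule ccontr)
      assume "q \<notin> fst -` V"
      then have qZ: "q \<notin> Z" unfolding Z_def .
      then have "k q \<noteq> 0" using kZ by auto
      then have "k q * k q > 0" by (auto simp: zero_less_mult_iff linorder_neq_iff)
      then have "Th 0 (k q * k q) > 0" by (rule Thp)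
      then have "g q \<noteq> 0" using qZ fZ[OF qZ] by (simp add: g_def)
      then show False using q by simp
    qed
  next
    fix q :: "(real^'m) \<times> (real^'n)" assume "q \<in> fst -` V"
    then show "q \<in> g -` {0}" by (simp add: g_def Z_def)
  qed
  show ?thesis using gs hs hf gz by blast
qed

end
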